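(* Let $\Gamma=(V,E,w)$ be a finite simple weighted digraph with vertex set $V=\{1,\dots,n\}$ and weights $0\le w_{ij}\le 1$ (with $w_{ij}=0$ iff $(i,j)\notin E$), and let $L=D-A$ be its graph Laplacian. Then $\Gamma$ is a complete dominance graph if and only if $\sigma(L)=\{d^{+}(1),d^{+}(2),\dots,d^{+}(n)\}=\{n-1,n-2,\dots,0\}$ (as multisets).
   Context: $d^{+}(i)=\sum_{j\in V} w_{ij}$, $D=\mathrm{diag}(d^{+}(1),\dots,d^{+}(n))$, $A=[w_{ij}]$, $L=D-A$; $\sigma(L)$ is the multiset of eigenvalues of $L$. A tournament is a digraph such that for each pair of distinct vertices $i,j$ exactly one of $(i,j),(j,i)$ is an edge. A complete dominance graph is an acyclic tournament in which every edge has weight $1$. *)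

theory Defs
  imports "Jordan_Normal_Form.Char_Poly" "HOL-Computational_Algebra.Fundamental_Theorem_Algebra"
begin

text \<open>A weighted digraph on the vertex set {0..<n} (vertex k here stands for vertex k+1 of
the paper) is given by a weight function w; the edge set is {(i,j). w i j \<noteq> 0}.\<close>

definition edges :: "nat \<Rightarrow> (nat \<Rightarrow> nat \<Rightarrow> real) \<Rightarrow> (nat \<times> nat) set" where
  "edges n w = {(i,j). i < n \<and> j < n \<and> w i j \<noteq> 0}"

definition simple_weighted_digraph :: "nat \<Rightarrow> (nat \<Rightarrow> nat \<Rightarrow> real) \<Rightarrow> bool" where
  "simple_weighted_digraph n w \<longleftrightarrow>
     (\<forall>i<n. \<forall>j<n. 0 \<le> w i j \<and> w i j \<le> 1) \<and> (\<forall>i<n. w i i = 0)"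

definition out_degree :: "nat \<Rightarrow> (nat \<Rightarrow> nat \<Rightarrow> real) \<Rightarrow> nat \<Rightarrow> real" where
  "out_degree n w i = (\<Sum>j<n. w i j)"

definition laplacian :: "nat \<Rightarrow> (nat \<Rightarrow> nat \<Rightarrow> real) \<Rightarrow> real mat" where
  "laplacian n w = mat n n (\<lambda>(i,j). (if i = j then out_degree n w i else 0) - w i j)"

definition tournament :: "nat \<Rightarrow> (nat \<Rightarrow> nat \<Rightarrow> real) \<Rightarrow> bool" where
  "tournament n w \<longleftrightarrow> (\<forall>i<n. \<forall>j<n. i \<noteq> j \<longrightarrow>
      ((i,j) \<in> edges n w \<longleftrightarrow> (j,i) \<notin> edges n w))"

definition complete_dominance_graph :: "nat \<Rightarrow> (nat \<Rightarrow> nat \<Rightarrow> real) \<Rightarrow> bool" where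
  "complete_dominance_graph n w \<longleftrightarrow>
     tournament n w \<and> acyclic (edges n w) \<and> (\<forall>(i,j) \<in> edges n w. w i j = 1)"

definition spectrum_mset :: "real mat \<Rightarrow> complex multiset" where
  "spectrum_mset A = proots (char_poly (map_mat complex_of_real A))"

end

theory Submission
  imports Defs "Jordan_Normal_Form.Schur_Decomposition"
begin

definition tr :: "'a::comm_ring_1 mat \<Rightarrow> 'a" where
  "tr M = (\<Sum>i<dim_row M. M $$ (i,i))"

lemma tr_mult_comm:
  assumes X: "X \<in> carrier_mat n n" and Y: "Y \<in> carrier_mat n n"
  shows "tr (X * Y) = tr (Y * X)"
proof -
  have "tr (X * Y) = (\<Sum>i<n. \<Sum>k<n. X $$ (i,k) * Y $$ (k,i))"
    using X Y by (simp add: tr_def scalar_prod_def atLeast0LessThan)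
  also have "\<dots> = (\<Sum>k<n. \<Sum>i<n. Y $$ (k,i) * X $$ (i,k))"
    by (subst sum.swap) (simp add: mult.commute)
  also have "\<dots> = tr (Y * X)"
    using X Y by (simp add: tr_def scalar_prod_def atLeast0LessThan)
  finally show ?thesis .
qed

lemma tr_sq:
  assumes X: "X \<in> carrier_mat n n"
  shows "tr (X * X) = (\<Sum>i<n. \<Sum>j<n. X $$ (i,j) * X $$ (j,i))"
  using X by (simp add: tr_def scalar_prod_def atLeast0LessThan)

lemma tr_sq_upper:
  assumes X: "X \<in> carrier_mat n n" and ut: "upper_triangular X"
  shows "tr (X * X) = (\<Sum>i<n. X $$ (i,i) ^ 2)"
proof -
  have "tr (X * X) = (\<Sum>i<n. \<Sum>j<n. X $$ (i,j) * X $$ (j,i))" by (rule tr_sq[OF X])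
  also have "\<dots> = (\<Sum>i<n. \<Sum>j<n. if j = i then X $$ (i,i) ^ 2 else 0)"
  proof (intro sum.cong refl)
    fix i j assume i: "i \<in> {..<n}" and j: "j \<in> {..<n}"
    show "X $$ (i,j) * X $$ (j,i) = (if j = i then X $$ (i,i) ^ 2 else 0)"
    proof (cases "j < i")
      case True then show ?thesis using upper_triangularD[OF ut True] i X by auto
    next
      case False
      show ?thesis
      proof (cases "j = i")
        case True then show ?thesis by (simp add: power2_eq_square)
      next
        case False2: False
        then have "i < j" using False by simp
        then show ?thesis using upper_triangularD[OF ut \<open>i < j\<close>] j X False2 by auto
      qed
    qed
  qed
  also have "\<dots> = (\<Sum>i<n. X $$ (i,i) ^ 2)" by simp
  finally show ?thesis .
qed

lemma proots_lin_list: "(\<Sum>p\<leftarrow>map (\<lambda>a. [:- a, 1:]) xs. proots p) = mset (xs :: complex list)"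
  by (induction xs) auto

lemma proots_sq_sum:
  fixes A :: "complex mat"
  assumes A: "A \<in> carrier_mat n n"
  shows "(\<Sum>x\<in>#proots (char_poly A). x ^ 2) = (\<Sum>i<n. \<Sum>j<n. A $$ (i,j) * A $$ (j,i))"
proof -
  obtain as where as: "char_poly A = (\<Prod>a\<leftarrow>as. [:- a, 1:])"
    using char_poly_factorized[OF A] by blast
  obtain B where B: "B \<in> carrier_mat n n" and ut: "upper_triangular B" and sim: "similar_mat A B"
    using schur_decomposition_exists[OF A as] by blast
  have cp: "char_poly A = (\<Prod>a\<leftarrow>diag_mat B. [:- a, 1:])"
    using char_poly_similar[OF sim] char_poly_upper_triangular[OF B ut] by simp
  have "proots (char_poly A) = (\<Sum>p\<leftarrow>map (\<lambda>a. [:- a, 1:]) (diag_mat B). proots p)"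
    unfolding cp by (subst proots_prod_list[symmetric]) (auto simp: o_def)
  also have "\<dots> = mset (diag_mat B)"
    by (rule proots_lin_list)
  finally have pr: "proots (char_poly A) = mset (diag_mat B)" .
  have md: "mset (diag_mat B) = image_mset (\<lambda>i. B $$ (i,i)) (mset_set {..<n})"
    using B by (simp add: diag_mat_def atLeast0LessThan)
  have "(\<Sum>x\<in>#proots (char_poly A). x ^ 2) = sum_mset (image_mset (\<lambda>i. B $$ (i,i) ^ 2) (mset_set {..<n}))"
    unfolding pr md by (simp only: image_mset.compositionality o_def)
  also have "\<dots> = (\<Sum>i<n. B $$ (i,i) ^ 2)" by (rule sum_unfold_sum_mset[symmetric])
  finally have "(\<Sum>x\<in>#proots (char_poly A). x ^ 2) = (\<Sum>i<n. B $$ (i,i) ^ 2)" .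
  also have "\<dots> = tr (B * B)" using tr_sq_upper[OF B ut] by simp
  also have "\<dots> = tr (A * A)"
  proof -
    obtain P Q where w: "similar_mat_wit A B P Q" using sim unfolding similar_mat_def by blast
    have P: "P \<in> carrier_mat n n" and Q: "Q \<in> carrier_mat n n" and QP: "Q * P = 1\<^sub>m n"
      and AB: "A = P * B * Q"
      using w A unfolding similar_mat_wit_def Let_def by auto
    have A2: "A ^\<^sub>m 2 = A * A" using A by (simp add: numeral_2_eq_2)
    have B2: "B ^\<^sub>m 2 = B * B" using B by (simp add: numeral_2_eq_2)
    have BB: "B * B \<in> carrier_mat n n" using B by simp
    have "A * A = P * (B * B) * Q"
      using similar_mat_wit_pow_id[OF w, of 2] A2 B2 by simp
    also have "\<dots> = P * ((B * B) * Q)" by (rule assoc_mult_mat[OF P BB Q])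
    finally have "tr (A * A) = tr (P * ((B * B) * Q))" by simp
    also have "\<dots> = tr (((B * B) * Q) * P)"
      by (rule tr_mult_comm[OF P]) (use BB Q in simp)
    also have "((B * B) * Q) * P = (B * B) * (Q * P)" by (rule assoc_mult_mat[OF BB Q P])
    also have "\<dots> = B * B" unfolding QP by (rule right_mult_one_mat[OF BB])
    finally show ?thesis by simp
  qed
  also have "\<dots> = (\<Sum>i<n. \<Sum>j<n. A $$ (i,j) * A $$ (j,i))" by (rule tr_sq[OF A])
  finally show ?thesis .
qed

lemma det_potential:
  fixes M :: "'a::comm_ring_1 mat" and c :: "nat \<Rightarrow> nat"
  assumes m: "M \<in> carrier_mat n n"
    and pot: "\<And>i j. i < n \<Longrightarrow> j < n \<Longrightarrow> i \<noteq> j \<Longrightarrow> M $$ (i,j) \<noteq> 0 \<Longrightarrow> c j < c i"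
  shows "det M = (\<Prod>i<n. M $$ (i,i))"
proof -
  let ?U = "{0..<n}"
  let ?PU = "{p. p permutes ?U}"
  let ?pp = "\<lambda>p. signof p * (\<Prod> i = 0 ..< n. M $$ (i, p i))"
  have fPU: "finite ?PU" by (simp add: finite_permutations)
  have p0: "?pp p = 0" if p: "p \<in> ?PU - {id}" for p
  proof -
    from p have pU: "p permutes ?U" and pid: "p \<noteq> id" by blast+
    have "\<exists>i. p i \<noteq> i" using pid by auto
    then obtain i where i1: "p i \<noteq> i" and imin: "\<And>j. p j \<noteq> j \<Longrightarrow> c i \<le> c j"
      using ex_has_least_nat[of "\<lambda>i. p i \<noteq> i" _ c] by blast
    have iU: "i < n" using i1 pU by (meson atLeastLessThan_iff permutes_not_in)
    have piU: "p i < n" using iU pU by (simp add: permutes_in_image)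
    have "p (p i) \<noteq> p i" using i1 pU by (metis permutes_inj inj_eq)
    then have "c i \<le> c (p i)" by (rule imin)
    have ipi: "i \<noteq> p i" using i1 by simp
    have "\<not> c (p i) < c i" using \<open>c i \<le> c (p i)\<close> by simp
    then have "M $$ (i, p i) = 0" using pot[OF iU piU ipi] by blast
    then have "(\<Prod> i = 0 ..< n. M $$ (i, p i)) = 0"
      using iU by (intro prod_zero) auto
    then show ?thesis by simp
  qed
  have "det M = (\<Sum> p \<in> ?PU. ?pp p)" unfolding det_def'[OF m] by auto
  also have "\<dots> = ?pp id + (\<Sum> p \<in> ?PU - {id}. ?pp p)"
    by (rule sum.remove, insert fPU, auto simp: permutes_id)
  also have "(\<Sum> p \<in> ?PU - {id}. ?pp p) = 0"
    by (rule sum.neutral, insert p0, auto)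
  finally show ?thesis by (simp add: atLeast0LessThan)
qed

lemma gauss2: "2 * (\<Sum>m<k. real m) = real k * real k - real k"
  by (induction k) (auto simp: algebra_simps)

lemma pair_sum:
  fixes w :: "nat \<Rightarrow> nat \<Rightarrow> real"
  assumes fin: "finite S"
    and pr: "\<And>a b. a \<in> S \<Longrightarrow> b \<in> S \<Longrightarrow> a \<noteq> b \<Longrightarrow> w a b + w b a = 1"
    and diag: "\<And>a. a \<in> S \<Longrightarrow> w a a = 0"
  shows "2 * (\<Sum>a\<in>S. \<Sum>b\<in>S. w a b) = real (card S) * real (card S) - real (card S)"
proof -
  have "2 * (\<Sum>a\<in>S. \<Sum>b\<in>S. w a b) = (\<Sum>a\<in>S. \<Sum>b\<in>S. w a b) + (\<Sum>a\<in>S. \<Sum>b\<in>S. w b a)"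
    by (subst (2) sum.swap) simp
  also have "\<dots> = (\<Sum>a\<in>S. \<Sum>b\<in>S. w a b + w b a)"
    by (simp add: sum.distrib)
  also have "\<dots> = (\<Sum>a\<in>S. \<Sum>b\<in>S. 1 - (if a = b then 1 else 0))"
    by (intro sum.cong refl) (auto simp: pr diag)
  also have "\<dots> = (\<Sum>a\<in>S. real (card S) - 1)"
    by (intro sum.cong refl) (simp add: sum_subtractf fin)
  also have "\<dots> = real (card S) * real (card S) - real (card S)"
    by (simp add: algebra_simps)
  finally show ?thesis .
qed

lemma lap_carrier: "laplacian n w \<in> carrier_mat n n"
  by (simp add: laplacian_def)

lemma lap_dim[simp]: "dim_row (laplacian n w) = n" "dim_col (laplacian n w) = n"
  by (simp_all add: laplacian_def)

lemma lap_index: "i < n \<Longrightarrow> j < n \<Longrightarrow>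
  laplacian n w $$ (i,j) = (if i = j then out_degree n w i else 0) - w i j"
  by (simp add: laplacian_def)

lemma spectrum_from_potential:
  fixes c :: "nat \<Rightarrow> nat"
  assumes sw: "simple_weighted_digraph n w"
    and pot: "\<And>i j. i < n \<Longrightarrow> j < n \<Longrightarrow> w i j \<noteq> 0 \<Longrightarrow> c j < c i"
  shows "spectrum_mset (laplacian n w) = image_mset complex_of_real (mset (map (out_degree n w) [0..<n]))"
proof -
  let ?A = "map_mat complex_of_real (laplacian n w)"
  let ?M = "char_poly_matrix ?A"
  have A: "?A \<in> carrier_mat n n" using lap_carrier by simp
  have M: "?M \<in> carrier_mat n n" using A by simp
  have wii: "\<And>i. i < n \<Longrightarrow> w i i = 0" using sw by (simp add: simple_weighted_digraph_def)
  have Mij: "?M $$ (i,j) = (if i = j then [:0,1:] else 0) + [: - complex_of_real (laplacian n w $$ (i,j)) :]"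
    if "i < n" "j < n" for i j
    using that by (simp add: char_poly_matrix_def lap_carrier)
  have "det ?M = (\<Prod>i<n. ?M $$ (i,i))"
  proof (rule det_potential[OF M])
    fix i j assume ij: "i < n" "j < n" "i \<noteq> j" and nz: "?M $$ (i,j) \<noteq> 0"
    then have "w i j \<noteq> 0" using Mij[OF ij(1,2)] lap_index[OF ij(1,2)] by auto
    then show "c j < c i" using pot ij by blast
  qed
  also have "\<dots> = (\<Prod>i<n. [: - complex_of_real (out_degree n w i), 1 :])"
    by (intro prod.cong refl) (simp add: Mij lap_index wii)
  finally have cp: "char_poly ?A = (\<Prod>i<n. [: - complex_of_real (out_degree n w i), 1 :])"
    by (simp add: char_poly_def)
  have "spectrum_mset (laplacian n w) = (\<Sum>i<n. {# complex_of_real (out_degree n w i) #})"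
    unfolding spectrum_mset_def cp by (subst proots_prod) auto
  also have "\<dots> = image_mset complex_of_real (mset (map (out_degree n w) [0..<n]))"
    by (simp add: sum_unfold_sum_mset atLeast0LessThan image_mset.compositionality o_def)
  finally show ?thesis .
qed

lemma forward:
  assumes sw: "simple_weighted_digraph n w" and cdg: "complete_dominance_graph n w"
  shows "spectrum_mset (laplacian n w) = image_mset complex_of_real (mset (map (out_degree n w) [0..<n]))
     \<and> mset (map (out_degree n w) [0..<n]) = mset (map real [0..<n])"
proof -
  have wii: "\<And>i. i < n \<Longrightarrow> w i i = 0" using sw by (simp add: simple_weighted_digraph_def)
  have w01: "w i j = 0 \<or> w i j = 1" if "i < n" "j < n" for i j
    using cdg that unfolding complete_dominance_graph_def edges_def by auto
  have tour: "w i j \<noteq> 0 \<longleftrightarrow> w j i = 0" if "i < n" "j < n" "i \<noteq> j" for i j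
    using cdg that unfolding complete_dominance_graph_def tournament_def edges_def by auto
  have acy: "acyclic (edges n w)" using cdg unfolding complete_dominance_graph_def by auto
  have E: "(i,j) \<in> edges n w" if "i < n" "j < n" "w i j \<noteq> 0" for i j
    using that by (simp add: edges_def)
  have trans: "w i k \<noteq> 0" if ij: "w i j \<noteq> 0" and jk: "w j k \<noteq> 0" and n: "i < n" "j < n" "k < n" for i j k
  proof (rule ccontr)
    assume "\<not> w i k \<noteq> 0"
    then have ik: "w i k = 0" by simp
    have "i \<noteq> k" 
    proof
      assume "i = k"
      then have "(i,i) \<in> (edges n w)\<^sup>+" using E[OF n(1,2) ij] E[OF n(2,3) jk] by auto
      then show False using acy by (simp add: acyclic_def)
    qed
    then have "w k i \<noteq> 0" using tour[OF n(3,1)] ik by auto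
    then have e3: "(k,i) \<in> edges n w" using E[OF n(3,1)] by simp
    have "(i,k) \<in> (edges n w)\<^sup>+"
      by (rule trancl_into_trancl[OF r_into_trancl[OF E[OF n(1,2) ij]] E[OF n(2,3) jk]])
    then have "(i,i) \<in> (edges n w)\<^sup>+" using e3 by (rule trancl_into_trancl)
    then show False using acy by (simp add: acyclic_def)
  qed
  define N where "N i = {..<n} \<inter> {j. w i j \<noteq> 0}" for i
  define c where "c i = card (N i)" for i
  have deg: "out_degree n w i = real (c i)" if "i < n" for i
  proof -
    have "out_degree n w i = (\<Sum>j<n. if w i j \<noteq> 0 then 1 else 0)"
      unfolding out_degree_def using w01 that by (intro sum.cong refl) fastforce
    also have "\<dots> = real (c i)"
      by (simp add: sum.If_cases c_def N_def)
    finally show ?thesis .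
  qed
  have pot: "c j < c i" if "i < n" "j < n" "w i j \<noteq> 0" for i j
  proof -
    have "N j \<subseteq> N i" using trans that unfolding N_def by auto
    moreover have "j \<in> N i" "j \<notin> N j" using that wii unfolding N_def by auto
    ultimately have "N j \<subset> N i" by blast
    then show ?thesis unfolding c_def by (intro psubset_card_mono) (auto simp: N_def)
  qed
  have cn: "c i < n" if "i < n" for i
  proof -
    have "N i \<subseteq> {..<n} - {i}" using wii that unfolding N_def by auto
    then have "c i \<le> card ({..<n} - {i})" unfolding c_def by (intro card_mono) auto
    then show ?thesis using that by auto
  qed
  have inj: "inj_on c {..<n}"
  proof (rule inj_onI)
    fix i j assume "i \<in> {..<n}" "j \<in> {..<n}" "c i = c j"
    then have ij: "i < n" "j < n" "c i = c j" by auto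
    show "i = j"
    proof (rule ccontr)
      assume "i \<noteq> j"
      then have "w i j \<noteq> 0 \<or> w j i \<noteq> 0" using tour[OF ij(1,2)] by auto
      then show False using pot[OF ij(1,2)] pot[OF ij(2,1)] ij(3) by auto
    qed
  qed
  have img: "c ` {..<n} = {..<n}"
  proof (rule card_subset_eq)
    show "c ` {..<n} \<subseteq> {..<n}" using cn by auto
    show "card (c ` {..<n}) = card {..<n}" using card_image[OF inj] by simp
  qed auto
  have "mset (map (out_degree n w) [0..<n]) = mset (map (real \<circ> c) [0..<n])"
    by (intro arg_cong[where f = mset] map_cong refl) (simp add: deg)
  also have "\<dots> = image_mset real (image_mset c (mset_set {..<n}))"
    by (simp add: atLeast0LessThan image_mset.compositionality)
  also have "\<dots> = mset (map real [0..<n])"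
    by (simp add: image_mset_mset_set[OF inj] img atLeast0LessThan)
  finally have degs: "mset (map (out_degree n w) [0..<n]) = mset (map real [0..<n])" .
  have "spectrum_mset (laplacian n w) = image_mset complex_of_real (mset (map (out_degree n w) [0..<n]))"
    by (rule spectrum_from_potential[of n w c, OF sw]) (rule pot)
  with degs show ?thesis by blast
qed

lemma backward:
  assumes sw: "simple_weighted_digraph n w"
    and spec: "spectrum_mset (laplacian n w) = image_mset complex_of_real (mset (map (out_degree n w) [0..<n]))"
    and degs: "mset (map (out_degree n w) [0..<n]) = mset (map real [0..<n])"
  shows "complete_dominance_graph n w"
proof -
  let ?d = "out_degree n w"
  let ?L = "laplacian n w"
  have wii: "\<And>i. i < n \<Longrightarrow> w i i = 0" using sw by (simp add: simple_weighted_digraph_def)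
  have w0: "\<And>i j. i < n \<Longrightarrow> j < n \<Longrightarrow> 0 \<le> w i j" using sw by (simp add: simple_weighted_digraph_def)
  have w1: "\<And>i j. i < n \<Longrightarrow> j < n \<Longrightarrow> w i j \<le> 1" using sw by (simp add: simple_weighted_digraph_def)
  have A: "map_mat complex_of_real ?L \<in> carrier_mat n n" using lap_carrier by simp
  have "(\<Sum>x\<in>#spectrum_mset ?L. x ^ 2) = (\<Sum>i<n. \<Sum>j<n. map_mat complex_of_real ?L $$ (i,j) * map_mat complex_of_real ?L $$ (j,i))"
    unfolding spectrum_mset_def by (rule proots_sq_sum[OF A])
  also have "\<dots> = complex_of_real (\<Sum>i<n. \<Sum>j<n. ?L $$ (i,j) * ?L $$ (j,i))"
    by simp
  finally have "complex_of_real (\<Sum>i<n. ?d i ^ 2) = complex_of_real (\<Sum>i<n. \<Sum>j<n. ?L $$ (i,j) * ?L $$ (j,i))"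
    unfolding spec by (simp add: atLeast0LessThan image_mset.compositionality o_def flip: sum_unfold_sum_mset)
  then have R1: "(\<Sum>i<n. ?d i ^ 2) = (\<Sum>i<n. \<Sum>j<n. ?L $$ (i,j) * ?L $$ (j,i))"
    using of_real_eq_iff by blast
  also have "\<dots> = (\<Sum>i<n. \<Sum>j<n. (if i = j then ?d i ^ 2 else 0) + w i j * w j i)"
    by (intro sum.cong refl) (auto simp: lap_index wii power2_eq_square)
  also have "\<dots> = (\<Sum>i<n. ?d i ^ 2) + (\<Sum>i<n. \<Sum>j<n. w i j * w j i)"
    by (simp add: sum.distrib)
  finally have "(\<Sum>i<n. \<Sum>j<n. w i j * w j i) = 0" by simp
  moreover have nn1: "0 \<le> w i j * w j i" if "i < n" "j < n" for i j using w0 that by simp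
  moreover have nn2: "0 \<le> (\<Sum>j<n. w i j * w j i)" if "i < n" for i
    using nn1 that by (intro sum_nonneg) auto
  ultimately have "\<forall>i\<in>{..<n}. (\<Sum>j<n. w i j * w j i) = 0"
    by (subst (asm) sum_nonneg_eq_0_iff) auto
  then have prod0: "w i j * w j i = 0" if "i < n" "j < n" for i j
  proof -
    have "(\<Sum>j<n. w i j * w j i) = 0" using that \<open>\<forall>i\<in>{..<n}. _\<close> by blast
    then show ?thesis using sum_nonneg_eq_0_iff[of "{..<n}" "\<lambda>j. w i j * w j i"] nn1 that by auto
  qed
  have sumd: "(\<Sum>i<n. ?d i) = (\<Sum>i<n. real i)"
    using arg_cong[OF degs, of sum_mset]
    by (simp add: atLeast0LessThan flip: sum_unfold_sum_mset)
  have row: "(\<Sum>j<n. (1::real) - (if i = j then 1 else 0)) = real n - 1" if "i < n" for i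
    using that by (simp add: sum_subtractf)
  have "(\<Sum>i<n. \<Sum>j<n. (1 - (if i = j then 1 else 0)) - (w i j + w j i))
        = (\<Sum>i<n. \<Sum>j<n. (1::real) - (if i = j then 1 else 0)) - ((\<Sum>i<n. \<Sum>j<n. w i j) + (\<Sum>i<n. \<Sum>j<n. w j i))"
    by (simp add: sum_subtractf sum.distrib)
  also have "(\<Sum>i<n. \<Sum>j<n. w j i) = (\<Sum>i<n. \<Sum>j<n. w i j)"
    by (rule sum.swap)
  also have "(\<Sum>i<n. \<Sum>j<n. w i j) = (\<Sum>i<n. real i)"
    using sumd by (simp add: out_degree_def)
  also have "(\<Sum>i<n. \<Sum>j<n. (1::real) - (if i = j then 1 else 0)) = (\<Sum>i<n. real n - 1)"
    by (intro sum.cong refl) (simp add: row)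
  finally have "(\<Sum>i<n. \<Sum>j<n. (1 - (if i = j then 1 else 0)) - (w i j + w j i)) = 0"
    using gauss2[of n] by (simp add: algebra_simps)
  moreover have nn: "0 \<le> (1 - (if i = j then 1 else 0)) - (w i j + w j i)" if "i < n" "j < n" for i j
  proof (cases "i = j")
    case True then show ?thesis using wii that by simp
  next
    case False
    have "w i j = 0 \<or> w j i = 0" using prod0[OF that] by simp
    then show ?thesis using False w0 w1 that by auto
  qed
  moreover have nn3: "0 \<le> (\<Sum>j<n. (1 - (if i = j then 1 else 0)) - (w i j + w j i))" if "i < n" for i
    using nn that by (intro sum_nonneg) auto
  ultimately have all0: "\<forall>i\<in>{..<n}. (\<Sum>j<n. (1 - (if i = j then 1 else 0)) - (w i j + w j i)) = 0"
    by (subst (asm) sum_nonneg_eq_0_iff) auto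
  have pair1: "w i j + w j i = 1" if "i < n" "j < n" "i \<noteq> j" for i j
  proof -
    have "(\<Sum>j<n. (1 - (if i = j then 1 else 0)) - (w i j + w j i)) = 0" using that all0 by blast
    then have H: "\<forall>x\<in>{..<n}. (1 - (if i = x then 1 else 0)) - (w i x + w x i) = (0::real)"
      using sum_nonneg_eq_0_iff[of "{..<n}" "\<lambda>j. (1 - (if i = j then 1 else 0)) - (w i j + w j i)"] nn that by blast
    have "(1 - (if i = j then 1 else 0)) - (w i j + w j i) = 0"
      using H that(2) by blast
    then show ?thesis using that by simp
  qed
  have dir: "(w i j = 1 \<and> w j i = 0) \<or> (w i j = 0 \<and> w j i = 1)" if "i < n" "j < n" "i \<noteq> j" for i j
    using pair1[OF that] prod0[OF that(1,2)] by auto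
  have tour: "tournament n w"
    unfolding tournament_def edges_def using dir by fastforce
  have wt: "\<forall>(i,j) \<in> edges n w. w i j = 1"
    unfolding edges_def using dir wii by fastforce
  define c where "c i = nat \<lfloor>?d i\<rfloor>" for i
  have dc: "?d i = real (c i) \<and> c i < n" if "i < n" for i
  proof -
    have "?d i \<in> set (map real [0..<n])"
      using mset_eq_setD[OF degs] that by auto
    then obtain m where "m < n" "?d i = real m" by auto
    then show ?thesis by (simp add: c_def)
  qed
  have mc: "mset (map c [0..<n]) = mset [0..<n]"
  proof -
    have "image_mset (\<lambda>x. nat \<lfloor>x\<rfloor>) (mset (map ?d [0..<n])) = image_mset (\<lambda>x. nat \<lfloor>x\<rfloor>) (mset (map real [0..<n]))"
      using degs by simp
    then show ?thesis by (simp add: c_def[abs_def] o_def image_mset.compositionality)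
  qed
  have inj: "inj_on c {..<n}"
    using mset_eq_imp_distinct_iff[OF mc] by (simp add: distinct_map atLeast0LessThan)
  have img: "c ` {..<n} = {..<n}"
    using mset_eq_setD[OF mc] by (simp add: atLeast0LessThan)
  have pot: "c j < c i" if ij: "i < n" "j < n" and wij: "w i j \<noteq> 0" for i j
  proof (rule ccontr)
    assume "\<not> c j < c i"
    moreover have "i \<noteq> j" using wij wii ij by auto
    then have "c i \<noteq> c j" using inj ij by (auto dest: inj_onD)
    ultimately have cij: "c i < c j" by simp
    define k where "k = c j"
    define S where "S = {l\<in>{..<n}. c l < k}"
    have kn: "k < n" using dc ij k_def by auto
    have SU: "S \<subseteq> {..<n}" by (auto simp: S_def)
    have injS: "inj_on c S" using inj_on_subset[OF inj SU] .
    have cS: "c ` S = {..<k}"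
    proof
      show "c ` S \<subseteq> {..<k}" by (auto simp: S_def)
      show "{..<k} \<subseteq> c ` S"
      proof
        fix m assume "m \<in> {..<k}"
        then have "m \<in> c ` {..<n}" using img kn by auto
        then obtain l where "l < n" "m = c l" by auto
        then show "m \<in> c ` S" using \<open>m \<in> {..<k}\<close> by (auto simp: S_def)
      qed
    qed
    have cardS: "card S = k" using card_image[OF injS] cS by simp
    have "(\<Sum>a\<in>S. ?d a) = (\<Sum>a\<in>S. real (c a))"
      using dc SU by (intro sum.cong refl) auto
    also have "\<dots> = (\<Sum>m\<in>c ` S. real m)" using sum.reindex[OF injS, of real] by simp
    finally have sS: "(\<Sum>a\<in>S. ?d a) = (\<Sum>m<k. real m)" using cS by simp
    have "(\<Sum>a\<in>S. ?d a) = (\<Sum>a\<in>S. (\<Sum>b\<in>{..<n} - S. w a b) + (\<Sum>b\<in>S. w a b))"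
      unfolding out_degree_def by (intro sum.cong refl sum.subset_diff[OF SU]) auto
    also have "\<dots> = (\<Sum>a\<in>S. \<Sum>b\<in>{..<n} - S. w a b) + (\<Sum>a\<in>S. \<Sum>b\<in>S. w a b)"
      by (simp add: sum.distrib)
    finally have eq: "(\<Sum>a\<in>S. ?d a) = (\<Sum>a\<in>S. \<Sum>b\<in>{..<n} - S. w a b) + (\<Sum>a\<in>S. \<Sum>b\<in>S. w a b)" .
    have "2 * (\<Sum>a\<in>S. \<Sum>b\<in>S. w a b) = real (card S) * real (card S) - real (card S)"
      by (rule pair_sum) (use SU pair1 wii in \<open>auto simp: S_def\<close>)
    then have "(\<Sum>a\<in>S. \<Sum>b\<in>{..<n} - S. w a b) = 0"
      using eq sS gauss2[of k] cardS by simp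
    moreover have "0 \<le> (\<Sum>b\<in>{..<n} - S. w a b)" if "a \<in> S" for a
      using that SU w0 by (intro sum_nonneg) auto
    moreover have fS: "finite S" using SU finite_subset by blast
    ultimately have "\<forall>a\<in>S. (\<Sum>b\<in>{..<n} - S. w a b) = 0"
      using sum_nonneg_eq_0_iff[OF fS, of "\<lambda>a. \<Sum>b\<in>{..<n} - S. w a b"] by blast
    moreover have iS: "i \<in> S" and jS: "j \<in> {..<n} - S" using ij cij k_def by (auto simp: S_def)
    ultimately have "(\<Sum>b\<in>{..<n} - S. w i b) = 0" by blast
    then have "w i j = 0"
      using sum_nonneg_eq_0_iff[of "{..<n} - S" "w i"] w0 ij jS by auto
    then show False using wij by simp
  qed
  have "(a,b) \<in> (edges n w)\<^sup>+ \<Longrightarrow> c b < c a" for a b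
  proof (induction rule: trancl_induct)
    case (base y) then show ?case using pot by (auto simp: edges_def)
  next
    case (step y z) then show ?case using pot by (fastforce simp: edges_def)
  qed
  then have "acyclic (edges n w)" unfolding acyclic_def by blast
  then show ?thesis using tour wt unfolding complete_dominance_graph_def by blast
qed

theorem corollary2p7:
  fixes n :: nat and w :: "nat \<Rightarrow> nat \<Rightarrow> real"
  assumes "simple_weighted_digraph n w"
  shows "complete_dominance_graph n w \<longleftrightarrow>
    (spectrum_mset (laplacian n w) = image_mset complex_of_real (mset (map (out_degree n w) [0..<n]))
     \<and> mset (map (out_degree n w) [0..<n]) = mset (map real [0..<n]))"
  using forward[OF assms] backward[OF assms] by blast

end
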